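(* A quasitopological group $G$ with identity $e$ is dense-connected if and only if $UV=G$ for all open neighborhoods $U$ and $V$ of $e$.
   Context: A quasitopological group is a group with a topology for which multiplication is separately continuous (each left and right translation is continuous) and inversion $x\mapsto x^{-1}$ is continuous; no separation axioms assumed. A space is dense-connected if every dense subset of it (with the subspace topology) is connected. *)

theory Defs
  imports "HOL-Analysis.Analysis" "HOL-Algebra.Coset"
begin

definition quasitopological_group :: "('a, 'b) monoid_scheme \<Rightarrow> 'a topology \<Rightarrow> bool" where
  "quasitopological_group G T \<longleftrightarrow>
     group G \<and> topspace T = carrier G \<and>
     (\<forall>g \<in> carrier G. continuous_map T T (\<lambda>x. g \<otimes>\<^bsub>G\<^esub> x)) \<and>
     (\<forall>g \<in> carrier G. continuous_map T T (\<lambda>x. x \<otimes>\<^bsub>G\<^esub> g)) \<and>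
     continuous_map T T (\<lambda>x. inv\<^bsub>G\<^esub> x)"

definition dense_connected :: "'a topology \<Rightarrow> bool" where
  "dense_connected T \<longleftrightarrow>
     (\<forall>S. S \<subseteq> topspace T \<and> T closure_of S = topspace T \<longrightarrow>
          connected_space (subtopology T S))"

end

theory Submission
  imports Defs
begin

definition hyper :: "'a topology \<Rightarrow> bool" where
  "hyper T \<longleftrightarrow> (\<forall>O1 O2. openin T O1 \<and> openin T O2 \<and> O1 \<noteq> {} \<and> O2 \<noteq> {} \<longrightarrow> O1 \<inter> O2 \<noteq> {})"

lemma dc_hyper: "dense_connected T \<longleftrightarrow> hyper T"
proof
  assume dc: "dense_connected T"
  show "hyper T" unfolding hyper_def
  proof (intro allI impI, rule ccontr)
    fix O1 O2 assume h: "openin T O1 \<and> openin T O2 \<and> O1 \<noteq> {} \<and> O2 \<noteq> {}" and d: "\<not> O1 \<inter> O2 \<noteq> {}"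
    define C where "C = topspace T - T closure_of O1"
    define S where "S = O1 \<union> C"
    have oC: "openin T C" unfolding C_def by (simp add: openin_diff)
    have O2C: "O2 \<subseteq> C" unfolding C_def using h d openin_Int_closure_of_eq_empty[of T O2 O1] openin_subset[of T O2]
      by auto
    have Ssub: "S \<subseteq> topspace T" unfolding S_def C_def using h openin_subset by blast
    have "T closure_of S = topspace T"
      unfolding dense_intersects_open
    proof (intro allI impI)
      fix W assume W: "openin T W \<and> W \<noteq> {}"
      show "S \<inter> W \<noteq> {}"
      proof (cases "W \<inter> O1 = {}")
        case True
        then have "W \<inter> T closure_of O1 = {}" using openin_Int_closure_of_eq_empty W by blast
        then have "W \<subseteq> C" unfolding C_def using W openin_subset by blast
        then show ?thesis using W unfolding S_def by blast
      qed (auto simp: S_def)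
    qed
    then have "connected_space (subtopology T S)" using dc Ssub unfolding dense_connected_def by blast
    moreover have "\<not> connected_space (subtopology T S)"
    proof -
      have o1: "openin (subtopology T S) O1" unfolding openin_subtopology S_def using h by blast
      have o2: "openin (subtopology T S) C" unfolding openin_subtopology S_def using oC by blast
      have "O1 \<subseteq> T closure_of O1" using h by (meson closure_of_subset openin_subset)
      then have dj: "O1 \<inter> C = {}" unfolding C_def by blast
      have "topspace (subtopology T S) \<subseteq> O1 \<union> C" by (simp add: S_def)
      moreover have "C \<noteq> {}" using O2C h by blast
      ultimately show ?thesis unfolding connected_space_def using o1 o2 dj h by meson
    qed
    ultimately show False by blast
  qed
next
  assume hy: "hyper T"
  show "dense_connected T" unfolding dense_connected_def
  proof (intro allI impI)
    fix S assume S: "S \<subseteq> topspace T \<and> T closure_of S = topspace T"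
    show "connected_space (subtopology T S)" unfolding connected_space_def
    proof
      assume "\<exists>E1 E2. openin (subtopology T S) E1 \<and> openin (subtopology T S) E2 \<and> topspace (subtopology T S) \<subseteq> E1 \<union> E2 \<and> E1 \<inter> E2 = {} \<and> E1 \<noteq> {} \<and> E2 \<noteq> {}"
      then obtain E1 E2 where E: "openin (subtopology T S) E1" "openin (subtopology T S) E2" "E1 \<inter> E2 = {}" "E1 \<noteq> {}" "E2 \<noteq> {}" by blast
      obtain O1 where O1: "openin T O1" "E1 = O1 \<inter> S" using E(1) openin_subtopology by metis
      obtain O2 where O2: "openin T O2" "E2 = O2 \<inter> S" using E(2) openin_subtopology by metis
      have "O1 \<inter> O2 \<noteq> {}" using hy O1 O2 E unfolding hyper_def by blast
      moreover have "openin T (O1 \<inter> O2)" using O1 O2 by (simp add: openin_Int)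
      ultimately have "S \<inter> (O1 \<inter> O2) \<noteq> {}" using S dense_intersects_open by blast
      then show False using E O1 O2 by blast
    qed
  qed
qed

lemma hyper_group:
  fixes G (structure)
  assumes q: "quasitopological_group G T"
  shows "hyper T \<longleftrightarrow>
           (\<forall>U V. openin T U \<and> \<one>\<^bsub>G\<^esub> \<in> U \<and> openin T V \<and> \<one>\<^bsub>G\<^esub> \<in> V
                  \<longrightarrow> U <#>\<^bsub>G\<^esub> V = carrier G)"
proof -
  interpret group G using q unfolding quasitopological_group_def by blast
  have top: "topspace T = carrier G" and lm: "\<And>g. g \<in> carrier G \<Longrightarrow> continuous_map T T (\<lambda>x. g \<otimes> x)"
    and iv: "continuous_map T T (\<lambda>x. inv x)" using q unfolding quasitopological_group_def by auto
  have pre: "\<And>f W. continuous_map T T f \<Longrightarrow> openin T W \<Longrightarrow> openin T {x \<in> carrier G. f x \<in> W}"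
    using openin_continuous_map_preimage top by metis
  show ?thesis
  proof
    assume hy: "hyper T"
    show "\<forall>U V. openin T U \<and> \<one> \<in> U \<and> openin T V \<and> \<one> \<in> V \<longrightarrow> U <#> V = carrier G"
    proof (intro allI impI)
      fix U V assume uv: "openin T U \<and> \<one> \<in> U \<and> openin T V \<and> \<one> \<in> V"
      have Uc: "U \<subseteq> carrier G" "V \<subseteq> carrier G" using uv openin_subset top by metis+
      show "U <#> V = carrier G"
      proof
        show "U <#> V \<subseteq> carrier G" using Uc unfolding set_mult_def by auto
        show "carrier G \<subseteq> U <#> V"
        proof
          fix g assume g: "g \<in> carrier G"
          define W where "W = {x \<in> carrier G. inv x \<in> V}"
          define W2 where "W2 = {x \<in> carrier G. inv g \<otimes> x \<in> W}"
          have oW: "openin T W" unfolding W_def using pre iv uv by blast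
          have oW2: "openin T W2" unfolding W2_def using pre[OF lm[of "inv g"] oW] g by simp
          have "g \<in> W2" unfolding W2_def W_def using g uv by simp
          then obtain x where x: "x \<in> U" "x \<in> W2" using hy oW2 uv unfolding hyper_def by blast
          have xc: "x \<in> carrier G" using x Uc by blast
          have "inv (inv g \<otimes> x) \<in> V" using x(2) unfolding W2_def W_def by simp
          then have v: "inv x \<otimes> g \<in> V" using xc g by (simp add: inv_mult_group)
          have "g = x \<otimes> (inv x \<otimes> g)" using xc g by (simp add: m_assoc[symmetric])
          then show "g \<in> U <#> V" using x(1) v unfolding set_mult_def by blast
        qed
      qed
    qed
  next
    assume uv: "\<forall>U V. openin T U \<and> \<one> \<in> U \<and> openin T V \<and> \<one> \<in> V \<longrightarrow> U <#> V = carrier G"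
    show "hyper T" unfolding hyper_def
    proof (intro allI impI)
      fix O1 O2 assume h: "openin T O1 \<and> openin T O2 \<and> O1 \<noteq> {} \<and> O2 \<noteq> {}"
      then obtain a b where ab: "a \<in> O1" "b \<in> O2" by blast
      have abc: "a \<in> carrier G" "b \<in> carrier G" using ab h openin_subset top by blast+
      define U where "U = {x \<in> carrier G. a \<otimes> x \<in> O1}"
      define V0 where "V0 = {x \<in> carrier G. b \<otimes> x \<in> O2}"
      define V where "V = {x \<in> carrier G. inv x \<in> V0}"
      have oU: "openin T U" unfolding U_def using pre[OF lm[of a]] abc h by blast
      have oV0: "openin T V0" unfolding V0_def using pre[OF lm[of b]] abc h by blast
      have oV: "openin T V" unfolding V_def using pre[OF iv oV0] by blast
      have "\<one> \<in> U" "\<one> \<in> V" using ab abc unfolding U_def V_def V0_def by auto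
      then have "U <#> V = carrier G" using uv oU oV by blast
      moreover have "inv a \<otimes> b \<in> carrier G" using abc by simp
      ultimately obtain u v where uv': "u \<in> U" "v \<in> V" "inv a \<otimes> b = u \<otimes> v"
        unfolding set_mult_def by blast
      have uc: "u \<in> carrier G" "v \<in> carrier G" using uv' unfolding U_def V_def by auto
      have "a \<otimes> u = b \<otimes> inv v"
      proof -
        have "a \<otimes> (inv a \<otimes> b) \<otimes> inv v = a \<otimes> (u \<otimes> v) \<otimes> inv v" using uv'(3) by simp
        moreover have "a \<otimes> (inv a \<otimes> b) = b" using abc by (simp add: m_assoc[symmetric])
        moreover have "a \<otimes> (u \<otimes> v) \<otimes> inv v = a \<otimes> u" using abc uc by (simp add: m_assoc)
        ultimately show ?thesis by simp
      qed
      moreover have "a \<otimes> u \<in> O1" using uv'(1) unfolding U_def by simp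
      moreover have "b \<otimes> inv v \<in> O2" using uv'(2) unfolding V_def V0_def by simp
      ultimately show "O1 \<inter> O2 \<noteq> {}" by auto
    qed
  qed
qed

theorem theorem4p10:
  fixes G :: "('a, 'b) monoid_scheme" and T :: "'a topology"
  assumes "quasitopological_group G T"
  shows "dense_connected T \<longleftrightarrow>
           (\<forall>U V. openin T U \<and> \<one>\<^bsub>G\<^esub> \<in> U \<and> openin T V \<and> \<one>\<^bsub>G\<^esub> \<in> V
                  \<longrightarrow> U <#>\<^bsub>G\<^esub> V = carrier G)"
  unfolding dc_hyper by (rule hyper_group[OF assms])

end
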